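(* Let $T$ be a decomposition tree of a distance-hereditary graph $G$, and let $v$ be an internal node of $T$ labeled $\otimes$ with left child $v_l$ and right child $v_r$, such that property (P) holds at $v_l$ and at $v_r$. Then $\hat\gamma_0(v)=\min\{\hat\gamma_i(v_l)+\hat\gamma_i(v_r) : 0\le i\le \min\{|\hat{TS}(v_l)|,|\hat{TS}(v_r)|\}\}$.
   Context: All graphs are finite, simple, undirected. For a graph $H$ and $S\subseteq V(H)$, $N_H[S]$ is $S$ together with all vertices adjacent to a vertex of $S$, and $H[S]$ is the induced subgraph. Graphs carry a "twin set": a single-vertex graph on $x$ has twin set $\{x\}$. For vertex-disjoint graphs $G_l,G_r$ with twin sets $TS(G_l),TS(G_r)$: the true twin operation $G_l\otimes G_r$ has vertex set $V(G_l)\cup V(G_r)$, edge set $E(G_l)\cup E(G_r)\cup\{uw: u\in TS(G_l), w\in TS(G_r)\}$ and twin set $TS(G_l)\cup TS(G_r)$; the false twin operation $G_l\odot G_r$ has vertex set $V(G_l)\cup V(G_r)$, edge set $E(G_l)\cup E(G_r)$, twin set $TS(G_l)\cup TS(G_r)$; the attachment operation $G_l\oplus G_r$ has the same vertex and edge sets as $G_l\otimes G_r$ and twin set $TS(G_l)$. A decomposition tree $T$ of $G$ is a rooted binary tree whose leaves are in bijection with $V(G)$, each internal node having a left and a right child and a label in $\{\otimes,\odot,\oplus\}$; for each node $v$ define $\hat G(v)$ and $\hat{TS}(v)$ recursively: for a leaf $x$, the single-vertex graph on $x$ with twin set $\{x\}$; for an internal node $v$ with label $\circ$ and children $v_l,v_r$,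 $\hat G(v)=\hat G(v_l)\circ\hat G(v_r)$ with the corresponding twin set; one requires $\hat G(\text{root})=G$. Then $\hat G(v)$ is the subgraph of $G$ induced by the set $\hat V(v)$ of leaves below $v$. For a node $u$ and $0\le k\le|\hat{TS}(u)|$, call $S\subseteq\hat V(u)$ $k$-feasible if $\hat V(u)\setminus\hat{TS}(u)\subseteq N_{\hat G(u)}[S]$ and there is $X\subseteq S\cap\hat{TS}(u)$ with $|X|=k$ such that $\hat G(u)[S\setminus X]$ has a perfect matching. $\hat\gamma_k(u)$ is the minimum size of a $k$-feasible set. $\hat{min}(u)=\min\{\hat\gamma_k(u):0\le k\le|\hat{TS}(u)|\}$, and $\hat\alpha(u)$, $\hat\beta(u)$ are the smallest and the largest $k$ with $\hat\gamma_k(u)=\hat{min}(u)$. Property (P) holds at $u$ if for every $0\le k\le|\hat{TS}(u)|$: $\hat\gamma_k(u)=\hat{min}(u)+\hat\alpha(u)-k$ when $k\le\hat\alpha(u)$; $\hat\gamma_k(u)=\hat{min}(u)+k-\hat\beta(u)$ when $k\ge\hat\beta(u)$; $\hat\gamma_k(u)=\hat{min}(u)$ when $\hat\alpha(u)<k<\hat\beta(u)$ and $k-\hat\alpha(u)$ is even; and $\hat\gamma_k(u)=\hat{min}(u)+1$ otherwise. *)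

theory Defs
  imports "HOL-Library.Extended_Nat"
begin

definition induced_edges :: "'a set set \<Rightarrow> 'a set \<Rightarrow> 'a set set" where
  "induced_edges E S = {e \<in> E. e \<subseteq> S}"

definition closed_nbhd :: "'a set set \<Rightarrow> 'a set \<Rightarrow> 'a set" where
  "closed_nbhd E S = S \<union> {x. \<exists>y\<in>S. {x, y} \<in> E}"

definition has_perfect_matching :: "'a set \<Rightarrow> 'a set set \<Rightarrow> bool" where
  "has_perfect_matching V E \<longleftrightarrow>
     (\<exists>M \<subseteq> E. (\<forall>e\<in>M. e \<subseteq> V) \<and> (\<forall>e1\<in>M. \<forall>e2\<in>M. e1 \<noteq> e2 \<longrightarrow> e1 \<inter> e2 = {}) \<and> \<Union>M = V)"

definition is_walk :: "'a set \<Rightarrow> 'a set set \<Rightarrow> 'a list \<Rightarrow> bool" where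
  "is_walk V E xs \<longleftrightarrow> xs \<noteq> [] \<and> set xs \<subseteq> V \<and>
     (\<forall>i. Suc i < length xs \<longrightarrow> {xs ! i, xs ! Suc i} \<in> E)"

definition connected_graph :: "'a set \<Rightarrow> 'a set set \<Rightarrow> bool" where
  "connected_graph V E \<longleftrightarrow>
     (\<forall>u\<in>V. \<forall>w\<in>V. \<exists>xs. is_walk V E xs \<and> hd xs = u \<and> last xs = w)"

definition graph_dist :: "'a set \<Rightarrow> 'a set set \<Rightarrow> 'a \<Rightarrow> 'a \<Rightarrow> nat" where
  "graph_dist V E u w =
     (LEAST n. \<exists>xs. is_walk V E xs \<and> hd xs = u \<and> last xs = w \<and> length xs = Suc n)"

definition distance_hereditary :: "'a set \<Rightarrow> 'a set set \<Rightarrow> bool" where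
  "distance_hereditary V E \<longleftrightarrow>
     (\<forall>U \<subseteq> V. connected_graph U (induced_edges E U) \<longrightarrow>
        (\<forall>u\<in>U. \<forall>w\<in>U. graph_dist U (induced_edges E U) u w = graph_dist V E u w))"

datatype op = TrueTwin | FalseTwin | Attach

datatype 'a dtree = Leaf 'a | Node op "'a dtree" "'a dtree"

fun dverts :: "'a dtree \<Rightarrow> 'a set" where
  "dverts (Leaf x) = {x}"
| "dverts (Node _ l r) = dverts l \<union> dverts r"

fun dts :: "'a dtree \<Rightarrow> 'a set" where
  "dts (Leaf x) = {x}"
| "dts (Node TrueTwin l r) = dts l \<union> dts r"
| "dts (Node FalseTwin l r) = dts l \<union> dts r"
| "dts (Node Attach l r) = dts l"

fun dedges :: "'a dtree \<Rightarrow> 'a set set" where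
  "dedges (Leaf x) = {}"
| "dedges (Node FalseTwin l r) = dedges l \<union> dedges r"
| "dedges (Node _ l r) = dedges l \<union> dedges r \<union> {{u, w} |u w. u \<in> dts l \<and> w \<in> dts r}"

text \<open>Leaves are in bijection with the vertices: the leaf labels of the two
  children of every internal node are disjoint.\<close>
fun wf_dtree :: "'a dtree \<Rightarrow> bool" where
  "wf_dtree (Leaf x) = True"
| "wf_dtree (Node _ l r) = (wf_dtree l \<and> wf_dtree r \<and> dverts l \<inter> dverts r = {})"

fun subtrees :: "'a dtree \<Rightarrow> 'a dtree set" where
  "subtrees (Leaf x) = {Leaf x}"
| "subtrees (Node c l r) = insert (Node c l r) (subtrees l \<union> subtrees r)"

definition is_decomposition_tree :: "'a dtree \<Rightarrow> 'a set \<Rightarrow> 'a set set \<Rightarrow> bool" where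
  "is_decomposition_tree T V E \<longleftrightarrow> wf_dtree T \<and> dverts T = V \<and> dedges T = E"

definition k_feasible :: "nat \<Rightarrow> 'a dtree \<Rightarrow> 'a set \<Rightarrow> bool" where
  "k_feasible k u S \<longleftrightarrow> S \<subseteq> dverts u \<and>
     dverts u - dts u \<subseteq> closed_nbhd (dedges u) S \<and>
     (\<exists>X \<subseteq> S \<inter> dts u. card X = k \<and>
        has_perfect_matching (S - X) (induced_edges (dedges u) (S - X)))"

text \<open>Minimum size of a k-feasible set; infinity if none exists.\<close>
definition gamma :: "nat \<Rightarrow> 'a dtree \<Rightarrow> enat" where
  "gamma k u = (INF S \<in> {S. k_feasible k u S}. enat (card S))"

definition gmin :: "'a dtree \<Rightarrow> enat" where
  "gmin u = (MIN k \<in> {0..card (dts u)}. gamma k u)"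

definition galpha :: "'a dtree \<Rightarrow> nat" where
  "galpha u = (LEAST k. k \<le> card (dts u) \<and> gamma k u = gmin u)"

definition gbeta :: "'a dtree \<Rightarrow> nat" where
  "gbeta u = (GREATEST k. k \<le> card (dts u) \<and> gamma k u = gmin u)"

definition property_P :: "'a dtree \<Rightarrow> bool" where
  "property_P u \<longleftrightarrow> (\<forall>k \<le> card (dts u).
     (k \<le> galpha u \<longrightarrow> gamma k u = gmin u + enat (galpha u - k)) \<and>
     (k \<ge> gbeta u \<longrightarrow> gamma k u = gmin u + enat (k - gbeta u)) \<and>
     (galpha u < k \<and> k < gbeta u \<and> even (k - galpha u) \<longrightarrow> gamma k u = gmin u) \<and>
     (galpha u < k \<and> k < gbeta u \<and> odd (k - galpha u) \<longrightarrow> gamma k u = gmin u + 1))"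

end

theory Submission
  imports Defs
begin

lemma subtree_wf: "t \<in> subtrees T \<Longrightarrow> wf_dtree T \<Longrightarrow> wf_dtree t"
  by (induction T) auto

lemma finite_dverts: "finite (dverts t)"
  by (induction t) auto

lemma dts_sub: "dts t \<subseteq> dverts t"
  by (induction t rule: dts.induct) auto

lemma dedges_form: "wf_dtree t \<Longrightarrow> e \<in> dedges t \<Longrightarrow>
   \<exists>u w. e = {u, w} \<and> u \<noteq> w \<and> u \<in> dverts t \<and> w \<in> dverts t"
proof (induction t arbitrary: e rule: dedges.induct)
  case (1 x)
  then show ?case by simp
next
  case (2 l r)
  then show ?case by simp blast
next
  case ("3_1" l r)
  show ?case using "3_1" dts_sub[of l] dts_sub[of r]
    apply simp
    apply (elim disjE exE conjE)
    apply blast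
    apply blast
    by fastforce
next
  case ("3_2" l r)
  show ?case using "3_2" dts_sub[of l] dts_sub[of r]
    apply simp
    apply (elim disjE exE conjE)
    apply blast
    apply blast
    by fastforce
qed

lemma gamma_le: "k_feasible k u S \<Longrightarrow> gamma k u \<le> enat (card S)"
  unfolding gamma_def by (auto intro: INF_lower)

lemma gamma_attain: "gamma k u \<noteq> \<infinity> \<Longrightarrow> \<exists>S. k_feasible k u S \<and> gamma k u = enat (card S)"
proof -
  assume a: "gamma k u \<noteq> \<infinity>"
  let ?A = "(\<lambda>S. enat (card S)) ` {S. k_feasible k u S}"
  have "?A \<noteq> {}" using a unfolding gamma_def by (metis Inf_empty top_enat_def)
  then have "Inf ?A \<in> ?A" by (metis all_not_in_conv wellorder_InfI)
  then show ?thesis unfolding gamma_def by auto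
qed

lemma tt_dedges:
  "dedges (Node TrueTwin l r) = dedges l \<union> dedges r \<union> {{u, w} |u w. u \<in> dts l \<and> w \<in> dts r}"
  by simp

lemma tt_sym:
  "dedges (Node TrueTwin l r) = dedges (Node TrueTwin r l)"
  "dts (Node TrueTwin l r) = dts (Node TrueTwin r l)"
  "dverts (Node TrueTwin l r) = dverts (Node TrueTwin r l)"
  "wf_dtree (Node TrueTwin l r) = wf_dtree (Node TrueTwin r l)"
  by (auto simp: insert_commute)

lemma kf_sym: "k_feasible k (Node TrueTwin l r) S = k_feasible k (Node TrueTwin r l) S"
  unfolding k_feasible_def tt_sym ..

lemma union_feasible:
  assumes wf: "wf_dtree (Node TrueTwin l r)"
    and fl: "k_feasible i l Sl" and fr: "k_feasible i r Sr"
  shows "k_feasible 0 (Node TrueTwin l r) (Sl \<union> Sr) \<and> card (Sl \<union> Sr) = card Sl + card Sr"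
proof -
  have disj: "dverts l \<inter> dverts r = {}" using wf by simp
  have Sl: "Sl \<subseteq> dverts l" and Sr: "Sr \<subseteq> dverts r" using fl fr unfolding k_feasible_def by auto
  have finl: "finite Sl" using Sl finite_dverts by (rule finite_subset)
  have finr: "finite Sr" using Sr finite_dverts by (rule finite_subset)
  obtain Xl where Xl: "Xl \<subseteq> Sl \<inter> dts l" "card Xl = i"
     "has_perfect_matching (Sl - Xl) (induced_edges (dedges l) (Sl - Xl))"
    using fl unfolding k_feasible_def by blast
  obtain Xr where Xr: "Xr \<subseteq> Sr \<inter> dts r" "card Xr = i"
     "has_perfect_matching (Sr - Xr) (induced_edges (dedges r) (Sr - Xr))"
    using fr unfolding k_feasible_def by blast
  obtain Ml where Ml: "Ml \<subseteq> induced_edges (dedges l) (Sl - Xl)"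
     "\<forall>e1\<in>Ml. \<forall>e2\<in>Ml. e1 \<noteq> e2 \<longrightarrow> e1 \<inter> e2 = {}" "\<Union>Ml = Sl - Xl"
    using Xl(3) unfolding has_perfect_matching_def by (elim exE conjE) (rule that; assumption)
  obtain Mr where Mr: "Mr \<subseteq> induced_edges (dedges r) (Sr - Xr)"
     "\<forall>e1\<in>Mr. \<forall>e2\<in>Mr. e1 \<noteq> e2 \<longrightarrow> e1 \<inter> e2 = {}" "\<Union>Mr = Sr - Xr"
    using Xr(3) unfolding has_perfect_matching_def by (elim exE conjE) (rule that; assumption)
  have "Xl \<subseteq> Sl" "Xr \<subseteq> Sr" using Xl(1) Xr(1) by auto
  then have "finite Xl" "finite Xr" using finl finr finite_subset by auto
  then obtain f where f: "bij_betw f Xl Xr" using Xl(2) Xr(2) by (metis bij_betw_iff_card)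
  define M where "M = Ml \<union> Mr \<union> (\<lambda>x. {x, f x}) ` Xl"
  have fx: "x \<in> Xl \<Longrightarrow> f x \<in> Xr" for x using f bij_betwE by blast
  have finj: "x \<in> Xl \<Longrightarrow> y \<in> Xl \<Longrightarrow> f x = f y \<Longrightarrow> x = y" for x y
    using f unfolding bij_betw_def inj_on_def by blast
  have Mle: "\<forall>e\<in>Ml. e \<subseteq> Sl - Xl" and Mre: "\<forall>e\<in>Mr. e \<subseteq> Sr - Xr" using Ml(3) Mr(3) by auto
  have sub: "M \<subseteq> induced_edges (dedges (Node TrueTwin l r)) (Sl \<union> Sr)"
  proof
    fix e assume "e \<in> M"
    then consider "e \<in> Ml" | "e \<in> Mr" | x where "x \<in> Xl" "e = {x, f x}" unfolding M_def by blast
    then show "e \<in> induced_edges (dedges (Node TrueTwin l r)) (Sl \<union> Sr)"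
    proof cases
      case 1 then show ?thesis using Ml(1) unfolding induced_edges_def by auto
    next
      case 2 then show ?thesis using Mr(1) unfolding induced_edges_def by auto
    next
      case 3
      then have "e \<in> {{u, w} |u w. u \<in> dts l \<and> w \<in> dts r}" "e \<subseteq> Sl \<union> Sr"
        using fx[of x] Xl(1) Xr(1) by blast+
      then show ?thesis unfolding induced_edges_def by simp
    qed
  qed
  have XlSl: "Xl \<subseteq> dverts l" and XrSr: "Xr \<subseteq> dverts r" using Xl(1) Xr(1) Sl Sr by auto
  have L: "e \<subseteq> dverts l - Xl" if "e \<in> Ml" for e using Mle that Sl by blast
  have R: "e \<subseteq> dverts r - Xr" if "e \<in> Mr" for e using Mre that Sr by blast
  have fxr: "f x \<in> dverts r" if "x \<in> Xl" for x using fx[OF that] XrSr by blast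
  have xl: "x \<in> dverts l" if "x \<in> Xl" for x using that XlSl by blast
  have D: "A \<inter> B = {}" if "A \<subseteq> dverts l" "B \<subseteq> dverts r" for A B using that disj by blast
  have pw: "\<forall>e1\<in>M. \<forall>e2\<in>M. e1 \<noteq> e2 \<longrightarrow> e1 \<inter> e2 = {}"
  proof (intro ballI impI)
    fix e1 e2 assume e1: "e1 \<in> M" and e2: "e2 \<in> M" and ne: "e1 \<noteq> e2"
    from e1 consider "e1 \<in> Ml" | "e1 \<in> Mr" | x where "x \<in> Xl" "e1 = {x, f x}" unfolding M_def by blast
    then show "e1 \<inter> e2 = {}"
    proof cases
      case 1
      from e2 consider "e2 \<in> Ml" | "e2 \<in> Mr" | y where "y \<in> Xl" "e2 = {y, f y}" unfolding M_def by blast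
      then show ?thesis
      proof cases
        case 1 then show ?thesis using `e1 \<in> Ml` Ml(2) ne by blast
      next
        case 2 then show ?thesis using D[of e1 e2] L[OF `e1 \<in> Ml`] R by blast
      next
        case 3
        have "f y \<notin> e1" using D[of e1 "{f y}"] L[OF `e1 \<in> Ml`] fxr[OF 3(1)] by blast
        moreover have "y \<notin> e1" using L[OF `e1 \<in> Ml`] 3(1) by blast
        ultimately show ?thesis using 3(2) by blast
      qed
    next
      case 2
      from e2 consider "e2 \<in> Ml" | "e2 \<in> Mr" | y where "y \<in> Xl" "e2 = {y, f y}" unfolding M_def by blast
      then show ?thesis
      proof cases
        case 1 then show ?thesis using D[of e2 e1] L R[OF `e1 \<in> Mr`] by blast
      next
        case 2 then show ?thesis using `e1 \<in> Mr` Mr(2) ne by blast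
      next
        case 3
        have "y \<notin> e1" using D[of "{y}" e1] R[OF `e1 \<in> Mr`] xl[OF 3(1)] by blast
        moreover have "f y \<notin> e1" using R[OF `e1 \<in> Mr`] fx[OF 3(1)] by blast
        ultimately show ?thesis using 3(2) by blast
      qed
    next
      case 3
      from e2 consider "e2 \<in> Ml" | "e2 \<in> Mr" | y where "y \<in> Xl" "e2 = {y, f y}" unfolding M_def by blast
      then show ?thesis
      proof cases
        case 1
        have "f x \<notin> e2" using D[of e2 "{f x}"] L[OF 1] fxr[OF 3(1)] by blast
        moreover have "x \<notin> e2" using L[OF 1] 3(1) by blast
        ultimately show ?thesis using 3(2) by blast
      next
        case 2
        have "x \<notin> e2" using D[of "{x}" e2] R[OF 2] xl[OF 3(1)] by blast
        moreover have "f x \<notin> e2" using R[OF 2] fx[OF 3(1)] by blast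
        ultimately show ?thesis using 3(2) by blast
      next
        case y: 3
        have "x \<noteq> y" using 3 y ne by auto
        moreover have "x \<noteq> f y" using D[of "{x}" "{f y}"] xl[OF 3(1)] fxr[OF y(1)] by blast
        moreover have "y \<noteq> f x" using D[of "{y}" "{f x}"] xl[OF y(1)] fxr[OF 3(1)] by blast
        moreover have "f x \<noteq> f y" using finj 3(1) y(1) `x \<noteq> y` by blast
        ultimately show ?thesis using 3(2) y(2) by auto
      qed
    qed
  qed
  have un: "\<Union>M = Sl \<union> Sr"
  proof -
    have "\<Union>((\<lambda>x. {x, f x}) ` Xl) = Xl \<union> Xr" using f unfolding bij_betw_def by auto
    then show ?thesis unfolding M_def using Ml(3) Mr(3) Xl(1) Xr(1) by auto
  qed
  have pm: "has_perfect_matching (Sl \<union> Sr) (induced_edges (dedges (Node TrueTwin l r)) (Sl \<union> Sr))"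
    unfolding has_perfect_matching_def
    apply (rule exI[of _ M])
    using sub pw un unfolding induced_edges_def by auto
  have dom: "dverts (Node TrueTwin l r) - dts (Node TrueTwin l r) \<subseteq> closed_nbhd (dedges (Node TrueTwin l r)) (Sl \<union> Sr)"
  proof
    fix x assume x: "x \<in> dverts (Node TrueTwin l r) - dts (Node TrueTwin l r)"
    then consider "x \<in> dverts l - dts l" | "x \<in> dverts r - dts r" by auto
    then show "x \<in> closed_nbhd (dedges (Node TrueTwin l r)) (Sl \<union> Sr)"
    proof cases
      case 1 then have "x \<in> closed_nbhd (dedges l) Sl" using fl unfolding k_feasible_def by blast
      then show ?thesis unfolding closed_nbhd_def by auto
    next
      case 2 then have "x \<in> closed_nbhd (dedges r) Sr" using fr unfolding k_feasible_def by blast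
      then show ?thesis unfolding closed_nbhd_def by auto
    qed
  qed
  have "k_feasible 0 (Node TrueTwin l r) (Sl \<union> Sr)"
    unfolding k_feasible_def using Sl Sr dom pm by auto
  moreover have "card (Sl \<union> Sr) = card Sl + card Sr"
    using card_Un_disjoint[OF finl finr] Sl Sr disj by blast
  ultimately show ?thesis by blast
qed

lemma one_side:
  assumes wf: "wf_dtree (Node TrueTwin l r)"
    and dom: "dverts (Node TrueTwin l r) - dts (Node TrueTwin l r) \<subseteq> closed_nbhd (dedges (Node TrueTwin l r)) S"
    and M1: "M \<subseteq> induced_edges (dedges (Node TrueTwin l r)) S"
    and M2: "\<forall>e1\<in>M. \<forall>e2\<in>M. e1 \<noteq> e2 \<longrightarrow> e1 \<inter> e2 = {}"
    and M3: "\<Union>M = S"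
  shows "k_feasible (card {e\<in>M. \<not> e \<subseteq> dverts l \<and> \<not> e \<subseteq> dverts r}) l (S \<inter> dverts l)
     \<and> card {e\<in>M. \<not> e \<subseteq> dverts l \<and> \<not> e \<subseteq> dverts r} \<le> card (dts l)"
proof -
  define Mc where "Mc = {e\<in>M. \<not> e \<subseteq> dverts l \<and> \<not> e \<subseteq> dverts r}"
  define Ml where "Ml = {e\<in>M. e \<subseteq> dverts l}"
  define Xl where "Xl = \<Union>Mc \<inter> dverts l"
  have disj: "dverts l \<inter> dverts r = {}" and wfl: "wf_dtree l" and wfr: "wf_dtree r" using wf by auto
  have dtsl: "dts l \<subseteq> dverts l" and dtsr: "dts r \<subseteq> dverts r" by (rule dts_sub)+
  have El: "e \<subseteq> dverts l \<and> e \<noteq> {}" if "e \<in> dedges l" for e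
    using dedges_form[OF wfl that] by blast
  have Er: "e \<subseteq> dverts r \<and> e \<noteq> {}" if "e \<in> dedges r" for e
    using dedges_form[OF wfr that] by blast
  have E: "(e \<in> dedges l \<or> e \<in> dedges r \<or> (\<exists>u w. e = {u, w} \<and> u \<in> dts l \<and> w \<in> dts r)) \<and> e \<subseteq> S"
    if "e \<in> M" for e
    using M1 that unfolding induced_edges_def by auto
  have Mcf: "\<exists>u w. e = {u, w} \<and> u \<in> dts l \<and> w \<in> dts r" if "e \<in> Mc" for e
  proof -
    have "e \<in> M" "\<not> e \<subseteq> dverts l" "\<not> e \<subseteq> dverts r" using that unfolding Mc_def by auto
    then show ?thesis using E[of e] El[of e] Er[of e] by blast
  qed
  have Mcl: "e \<inter> dverts l = {u}" if "e \<in> Mc" "e = {u, w}" "u \<in> dts l" "w \<in> dts r" for e u w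
    using that dtsl dtsr disj by blast
  have Mle: "e \<in> dedges l" if "e \<in> Ml" for e
  proof -
    have e: "e \<in> M" "e \<subseteq> dverts l" using that unfolding Ml_def by auto
    have "e \<notin> dedges r" using Er[of e] e(2) disj by blast
    moreover have "\<not> (\<exists>u w. e = {u, w} \<and> u \<in> dts l \<and> w \<in> dts r)" using e(2) dtsr disj by blast
    ultimately show ?thesis using E[OF e(1)] by blast
  qed
  have XlS: "Xl \<subseteq> S \<inter> dts l"
  proof
    fix x assume "x \<in> Xl"
    then obtain e where e: "e \<in> Mc" "x \<in> e" "x \<in> dverts l" unfolding Xl_def by blast
    obtain u w where uw: "e = {u, w}" "u \<in> dts l" "w \<in> dts r" using Mcf[OF e(1)] by blast
    have "x = u" using Mcl[OF e(1) uw] e(2,3) by blast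
    moreover have "e \<subseteq> S" using E[of e] e(1) unfolding Mc_def by blast
    ultimately show "x \<in> S \<inter> dts l" using uw e by blast
  qed
  define g where "g e = the_elem (e \<inter> dverts l)" for e
  have gin: "g e \<in> e \<and> g e \<in> dverts l" if a: "e \<in> Mc" for e
  proof -
    obtain u w where uw: "e = {u, w}" "u \<in> dts l" "w \<in> dts r" using Mcf[OF a] by blast
    have "g e = u" unfolding g_def using Mcl[OF a uw] by simp
    then show ?thesis using uw dtsl by blast
  qed
  have ginj: "inj_on g Mc"
  proof (rule inj_onI)
    fix e1 e2 assume a: "e1 \<in> Mc" "e2 \<in> Mc" "g e1 = g e2"
    then have "g e1 \<in> e1 \<inter> e2" using gin[OF a(1)] gin[OF a(2)] by simp
    moreover have "e1 \<in> M" "e2 \<in> M" using a unfolding Mc_def by auto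
    ultimately show "e1 = e2" using M2 by blast
  qed
  have gim: "g ` Mc = Xl"
  proof
    show "g ` Mc \<subseteq> Xl" unfolding Xl_def using gin by blast
  next
    show "Xl \<subseteq> g ` Mc"
    proof
      fix x assume "x \<in> Xl"
      then obtain e where e: "e \<in> Mc" "x \<in> e" "x \<in> dverts l" unfolding Xl_def by blast
      obtain u w where uw: "e = {u, w}" "u \<in> dts l" "w \<in> dts r" using Mcf[OF e(1)] by blast
      have "g e = u" unfolding g_def using Mcl[OF e(1) uw] by simp
      moreover have "x = u" using Mcl[OF e(1) uw] e(2,3) by blast
      ultimately show "x \<in> g ` Mc" using e(1) by blast
    qed
  qed
  have cardX: "card Xl = card Mc" using card_image[OF ginj] gim by simp
  have finl: "finite (dts l)" using dtsl finite_dverts by (rule finite_subset)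
  have cb: "card Mc \<le> card (dts l)" using cardX XlS card_mono[OF finl] by (metis le_inf_iff)
  have Mlsub: "Ml \<subseteq> induced_edges (dedges l) (S \<inter> dverts l - Xl)"
  proof
    fix e assume e: "e \<in> Ml"
    have eM: "e \<in> M" "e \<subseteq> dverts l" using e unfolding Ml_def by auto
    have "e \<subseteq> S" using E[OF eM(1)] by blast
    moreover have "e \<inter> Xl = {}"
    proof (rule ccontr)
      assume "e \<inter> Xl \<noteq> {}"
      then obtain x e' where "x \<in> e" "x \<in> e'" "e' \<in> Mc" unfolding Xl_def by blast
      moreover then have "e' \<noteq> e" "e' \<in> M" using eM unfolding Mc_def by auto
      ultimately show False using M2 eM(1) by blast
    qed
    ultimately show "e \<in> induced_edges (dedges l) (S \<inter> dverts l - Xl)"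
      unfolding induced_edges_def using Mle[OF e] eM by blast
  qed
  have Mlun: "\<Union>Ml = S \<inter> dverts l - Xl"
  proof
    show "\<Union>Ml \<subseteq> S \<inter> dverts l - Xl" using Mlsub unfolding induced_edges_def by blast
  next
    show "S \<inter> dverts l - Xl \<subseteq> \<Union>Ml"
    proof
      fix x assume x: "x \<in> S \<inter> dverts l - Xl"
      then obtain e where e: "e \<in> M" "x \<in> e" using M3 by blast
      have "\<not> e \<subseteq> dverts r" using x e disj by blast
      moreover have "e \<notin> Mc" using x e unfolding Xl_def by blast
      ultimately have "e \<in> Ml" using e unfolding Mc_def Ml_def by blast
      then show "x \<in> \<Union>Ml" using e by blast
    qed
  qed
  have pm: "has_perfect_matching (S \<inter> dverts l - Xl) (induced_edges (dedges l) (S \<inter> dverts l - Xl))"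
    unfolding has_perfect_matching_def
  proof (intro exI conjI)
    show "Ml \<subseteq> induced_edges (dedges l) (S \<inter> dverts l - Xl)" by (rule Mlsub)
    show "\<forall>e\<in>Ml. e \<subseteq> S \<inter> dverts l - Xl" using Mlun by blast
    show "\<forall>e1\<in>Ml. \<forall>e2\<in>Ml. e1 \<noteq> e2 \<longrightarrow> e1 \<inter> e2 = {}" using M2 unfolding Ml_def by blast
    show "\<Union>Ml = S \<inter> dverts l - Xl" by (rule Mlun)
  qed
  have doml: "dverts l - dts l \<subseteq> closed_nbhd (dedges l) (S \<inter> dverts l)"
  proof
    fix x assume x: "x \<in> dverts l - dts l"
    then have "x \<notin> dverts r" using disj by blast
    then have "x \<in> dverts (Node TrueTwin l r) - dts (Node TrueTwin l r)" using x dtsr by auto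
    then have "x \<in> closed_nbhd (dedges (Node TrueTwin l r)) S" using dom by blast
    then consider "x \<in> S" | y where "y \<in> S" "{x, y} \<in> dedges (Node TrueTwin l r)"
      unfolding closed_nbhd_def by blast
    then show "x \<in> closed_nbhd (dedges l) (S \<inter> dverts l)"
    proof cases
      case 1 then show ?thesis using x unfolding closed_nbhd_def by blast
    next
      case 2
      have nr: "{x, y} \<notin> dedges r" using Er[of "{x, y}"] `x \<notin> dverts r` by (meson insert_subset)
      have nc: "\<not> (\<exists>u w. {x, y} = {u, w} \<and> u \<in> dts l \<and> w \<in> dts r)"
      proof
        assume "\<exists>u w. {x, y} = {u, w} \<and> u \<in> dts l \<and> w \<in> dts r"
        then obtain u w where uw: "{x, y} = {u, w}" "u \<in> dts l" "w \<in> dts r" by blast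
        then have "x = u \<or> x = w" by (metis doubleton_eq_iff)
        then show False using uw x `x \<notin> dverts r` dtsr by blast
      qed
      have "{x, y} \<in> dedges l \<or> {x, y} \<in> dedges r \<or> (\<exists>u w. {x, y} = {u, w} \<and> u \<in> dts l \<and> w \<in> dts r)"
        using 2(2) by simp
      then have "{x, y} \<in> dedges l" using nr nc by blast
      then have "y \<in> dverts l" using El[of "{x, y}"] by simp
      then show ?thesis using 2(1) `{x, y} \<in> dedges l` unfolding closed_nbhd_def by blast
    qed
  qed
  have SL: "S \<inter> dverts l \<subseteq> dverts l" by blast
  have "k_feasible (card Mc) l (S \<inter> dverts l)"
    unfolding k_feasible_def
  proof (intro conjI)
    show "\<exists>X\<subseteq>S \<inter> dverts l \<inter> dts l. card X = card Mc \<and>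
        has_perfect_matching (S \<inter> dverts l - X) (induced_edges (dedges l) (S \<inter> dverts l - X))"
      using XlS cardX pm dtsl by (intro exI[of _ Xl]) auto
  qed (rule SL, rule doml)
  then show ?thesis using cb unfolding Mc_def by simp
qed

lemma split_feasible:
  assumes wf: "wf_dtree (Node TrueTwin l r)" and fS: "k_feasible 0 (Node TrueTwin l r) S"
  shows "\<exists>i Sl Sr. i \<le> min (card (dts l)) (card (dts r)) \<and> k_feasible i l Sl \<and> k_feasible i r Sr
           \<and> card S = card Sl + card Sr"
proof -
  have Ssub: "S \<subseteq> dverts (Node TrueTwin l r)"
    and dom: "dverts (Node TrueTwin l r) - dts (Node TrueTwin l r) \<subseteq> closed_nbhd (dedges (Node TrueTwin l r)) S"
    using fS unfolding k_feasible_def by auto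
  have finS: "finite S" using Ssub finite_dverts by (rule finite_subset)
  obtain X where X: "X \<subseteq> S \<inter> dts (Node TrueTwin l r)" "card X = 0"
    "has_perfect_matching (S - X) (induced_edges (dedges (Node TrueTwin l r)) (S - X))"
    using fS unfolding k_feasible_def by blast
  have "finite X" using X(1) finS finite_subset by auto
  then have "X = {}" using X(2) by simp
  then have pm: "has_perfect_matching S (induced_edges (dedges (Node TrueTwin l r)) S)" using X(3) by simp
  obtain M where M1: "M \<subseteq> induced_edges (dedges (Node TrueTwin l r)) S"
    and M2: "\<forall>e1\<in>M. \<forall>e2\<in>M. e1 \<noteq> e2 \<longrightarrow> e1 \<inter> e2 = {}" and M3: "\<Union>M = S"
    using pm unfolding has_perfect_matching_def by (elim exE conjE) (rule that; assumption)
  define i where "i = card {e\<in>M. \<not> e \<subseteq> dverts l \<and> \<not> e \<subseteq> dverts r}"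
  have A: "k_feasible i l (S \<inter> dverts l) \<and> i \<le> card (dts l)"
    using one_side[OF wf dom M1 M2 M3] unfolding i_def .
  have wf': "wf_dtree (Node TrueTwin r l)" using wf tt_sym(4) by blast
  have eq: "{e\<in>M. \<not> e \<subseteq> dverts r \<and> \<not> e \<subseteq> dverts l} = {e\<in>M. \<not> e \<subseteq> dverts l \<and> \<not> e \<subseteq> dverts r}"
    by blast
  have B: "k_feasible i r (S \<inter> dverts r) \<and> i \<le> card (dts r)"
    using one_side[OF wf', of S M] dom M1 M2 M3 unfolding tt_sym(1,2,3)[of l r] eq i_def by blast
  have disj: "dverts l \<inter> dverts r = {}" using wf by simp
  have "S = (S \<inter> dverts l) \<union> (S \<inter> dverts r)" using Ssub by auto
  moreover have "card ((S \<inter> dverts l) \<union> (S \<inter> dverts r)) = card (S \<inter> dverts l) + card (S \<inter> dverts r)"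
    by (rule card_Un_disjoint) (use finS disj in auto)
  ultimately have "card S = card (S \<inter> dverts l) + card (S \<inter> dverts r)" by simp
  then show ?thesis using A B by auto
qed

theorem lemma11:
  fixes T :: "'a dtree" and V :: "'a set" and E :: "'a set set"
    and vl vr :: "'a dtree"
  assumes "is_decomposition_tree T V E"
    and "distance_hereditary V E"
    and "Node TrueTwin vl vr \<in> subtrees T"
    and "property_P vl" and "property_P vr"
  shows "gamma 0 (Node TrueTwin vl vr) =
         (MIN i \<in> {0..min (card (dts vl)) (card (dts vr))}. gamma i vl + gamma i vr)"
proof -
  have wf: "wf_dtree (Node TrueTwin vl vr)"
    using assms(1,3) subtree_wf unfolding is_decomposition_tree_def by blast
  let ?I = "{0..min (card (dts vl)) (card (dts vr))}"
  let ?f = "\<lambda>i. gamma i vl + gamma i vr"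
  have fin: "finite (?f ` ?I)" and ne: "?f ` ?I \<noteq> {}" by auto
  have le1: "gamma 0 (Node TrueTwin vl vr) \<le> Min (?f ` ?I)"
  proof (rule Min.boundedI[OF fin ne])
    fix a assume "a \<in> ?f ` ?I"
    then obtain i where a: "a = ?f i" by blast
    show "gamma 0 (Node TrueTwin vl vr) \<le> a"
    proof (cases "gamma i vl = \<infinity> \<or> gamma i vr = \<infinity>")
      case True then show ?thesis using a by auto
    next
      case False
      then obtain Sl Sr where Sl: "k_feasible i vl Sl" "gamma i vl = enat (card Sl)"
        and Sr: "k_feasible i vr Sr" "gamma i vr = enat (card Sr)" using gamma_attain by metis
      have "k_feasible 0 (Node TrueTwin vl vr) (Sl \<union> Sr) \<and> card (Sl \<union> Sr) = card Sl + card Sr"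
        by (rule union_feasible[OF wf Sl(1) Sr(1)])
      then have "gamma 0 (Node TrueTwin vl vr) \<le> enat (card Sl + card Sr)"
        using gamma_le by metis
      then show ?thesis using a Sl(2) Sr(2) by simp
    qed
  qed
  have le2: "Min (?f ` ?I) \<le> gamma 0 (Node TrueTwin vl vr)"
  proof (cases "gamma 0 (Node TrueTwin vl vr) = \<infinity>")
    case True then show ?thesis by simp
  next
    case False
    then obtain S where S: "k_feasible 0 (Node TrueTwin vl vr) S" "gamma 0 (Node TrueTwin vl vr) = enat (card S)"
      using gamma_attain by metis
    obtain i Sl Sr where i: "i \<le> min (card (dts vl)) (card (dts vr))" "k_feasible i vl Sl"
      "k_feasible i vr Sr" "card S = card Sl + card Sr"
      using split_feasible[OF wf S(1)] by blast
    have "Min (?f ` ?I) \<le> ?f i" using i(1) fin by (intro Min_le) auto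
    also have "\<dots> \<le> enat (card Sl) + enat (card Sr)" using gamma_le i(2,3) by (intro add_mono)
    also have "\<dots> = gamma 0 (Node TrueTwin vl vr)" using S(2) i(4) by simp
    finally show ?thesis .
  qed
  show ?thesis by (rule antisym[OF le1 le2])
qed

end
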